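(* Let $\alpha$ be a countably infinite order type with $\alpha=\omega\alpha'+n$, $n<\omega$. Let $S_\alpha:=\Omega(\alpha')\oplus n$ and $Q_\alpha:=I_{<\omega}(S_\alpha)$. Then $Q_\alpha\in\mathbb{J}_\alpha$, and for every sierpinskisation $S$ of $\alpha$ and $\omega$, $Q_\alpha$ is embeddable in $I_{<\omega}(S)$ by a map preserving finite joins.
   Context: A sierpinskisation of a countable order type $\beta$ and $\omega$ is a poset whose order is the intersection of two linear orders on its underlying set, one of type $\beta$ and one of type $\omega$; equivalently it is obtained from a bijection $\varphi:\mathbb{N}\to C$ onto a chain $C$ of type $\beta$ by setting $x\le y$ iff $x\le y$ in $\mathbb{N}$ and $\varphi(x)\le\varphi(y)$ in $C$. $\omega\alpha'$ is the ordered sum of $\alpha'$ copies of $\omega$, i.e. $\omega\times\alpha'$ ordered lexicographically with the $\alpha'$-coordinate dominant. A sierpinskisation of $\omega\alpha'$ and $\omega$ is monotonic if it comes from a bijection $\varphi:\mathbb{N}\to\omega\alpha'$ such that $\varphi^{-1}$ is order-preserving on each subset $\omega\times\{\beta\}$, $\beta\in\alpha'$; $\Omega(\alpha')$ denotes a monotonic sierpinskisation of $\omega\alpha'$ and $\omega$ (any two such embed in each other). $n$ denotes the $n$-element chain and $\oplus$ the direct sum (disjoint union, elements from different parts incomparable). $I_{<\omega}(S)$ is the set of finitely generated initial segments of $S$ ordered by inclusion. $\mathbb{J}_\alpha$ is the class of join-semilattices $P$ with a least element whose lattice $J(P)$ of ideals (non-empty up-directed initial segments, ordered by inclusion) contains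 a chain of type $I(\alpha)$, the type of the chain of all initial segments of a chain of type $\alpha$. A map preserves finite joins if $f(\bigvee X)=\bigvee f(X)$ for all finite $X$. *)

theory Defs
  imports Main "HOL-Library.Countable_Set"
begin

definition po_on :: "'a set \<Rightarrow> ('a \<Rightarrow> 'a \<Rightarrow> bool) \<Rightarrow> bool" where
  "po_on P le \<longleftrightarrow> (\<forall>x\<in>P. le x x) \<and>
     (\<forall>x\<in>P. \<forall>y\<in>P. le x y \<and> le y x \<longrightarrow> x = y) \<and>
     (\<forall>x\<in>P. \<forall>y\<in>P. \<forall>z\<in>P. le x y \<and> le y z \<longrightarrow> le x z)"

definition lin_on :: "'a set \<Rightarrow> ('a \<Rightarrow> 'a \<Rightarrow> bool) \<Rightarrow> bool" where
  "lin_on P le \<longleftrightarrow> po_on P le \<and> (\<forall>x\<in>P. \<forall>y\<in>P. le x y \<or> le y x)"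

definition order_iso :: "'a set \<Rightarrow> ('a \<Rightarrow> 'a \<Rightarrow> bool) \<Rightarrow> 'b set \<Rightarrow> ('b \<Rightarrow> 'b \<Rightarrow> bool) \<Rightarrow> bool" where
  "order_iso P le P' le' \<longleftrightarrow>
     (\<exists>h. bij_betw h P P' \<and> (\<forall>x\<in>P. \<forall>y\<in>P. le x y \<longleftrightarrow> le' (h x) (h y)))"

definition init_seg :: "'a set \<Rightarrow> ('a \<Rightarrow> 'a \<Rightarrow> bool) \<Rightarrow> 'a set \<Rightarrow> bool" where
  "init_seg P le X \<longleftrightarrow> X \<subseteq> P \<and> (\<forall>x\<in>X. \<forall>y\<in>P. le y x \<longrightarrow> y \<in> X)"

definition down :: "'a set \<Rightarrow> ('a \<Rightarrow> 'a \<Rightarrow> bool) \<Rightarrow> 'a set \<Rightarrow> 'a set" where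
  "down P le F = {y\<in>P. \<exists>x\<in>F. le y x}"

text \<open>$I_{<\omega}(P)$: the finitely generated initial segments (ordered by inclusion).\<close>
definition fin_inits :: "'a set \<Rightarrow> ('a \<Rightarrow> 'a \<Rightarrow> bool) \<Rightarrow> 'a set set" where
  "fin_inits P le = {X. \<exists>F. finite F \<and> F \<subseteq> P \<and> X = down P le F}"

definition ideal_of :: "'a set \<Rightarrow> ('a \<Rightarrow> 'a \<Rightarrow> bool) \<Rightarrow> 'a set \<Rightarrow> bool" where
  "ideal_of P le I \<longleftrightarrow> init_seg P le I \<and> I \<noteq> {} \<and>
     (\<forall>x\<in>I. \<forall>y\<in>I. \<exists>z\<in>I. le x z \<and> le y z)"

definition is_lub :: "'a set \<Rightarrow> ('a \<Rightarrow> 'a \<Rightarrow> bool) \<Rightarrow> 'a set \<Rightarrow> 'a \<Rightarrow> bool" where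
  "is_lub P le X s \<longleftrightarrow> s \<in> P \<and> (\<forall>x\<in>X. le x s) \<and> (\<forall>u\<in>P. (\<forall>x\<in>X. le x u) \<longrightarrow> le s u)"

definition join_semilattice_bot :: "'a set \<Rightarrow> ('a \<Rightarrow> 'a \<Rightarrow> bool) \<Rightarrow> bool" where
  "join_semilattice_bot P le \<longleftrightarrow> po_on P le \<and> (\<exists>b\<in>P. \<forall>x\<in>P. le b x) \<and>
     (\<forall>x\<in>P. \<forall>y\<in>P. \<exists>s. is_lub P le {x, y} s)"

text \<open>$P \in \mathbb{J}_\alpha$ where the chain $\alpha$ is given by (A, leA):
  $P$ is a join-semilattice with least element and $J(P)$ (ideals ordered by inclusion)
  contains a chain isomorphic to $I(\alpha)$ (initial segments of $\alpha$ by inclusion).\<close>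
definition in_J :: "'c set \<Rightarrow> ('c \<Rightarrow> 'c \<Rightarrow> bool) \<Rightarrow> 'a set \<Rightarrow> ('a \<Rightarrow> 'a \<Rightarrow> bool) \<Rightarrow> bool" where
  "in_J A leA P le \<longleftrightarrow> join_semilattice_bot P le \<and>
     (\<exists>f. (\<forall>X. init_seg A leA X \<longrightarrow> ideal_of P le (f X)) \<and>
          (\<forall>X Y. init_seg A leA X \<longrightarrow> init_seg A leA Y \<longrightarrow> (X \<subseteq> Y \<longleftrightarrow> f X \<subseteq> f Y)))"

definition join_pres_emb :: "'a set \<Rightarrow> ('a \<Rightarrow> 'a \<Rightarrow> bool) \<Rightarrow> 'b set \<Rightarrow> ('b \<Rightarrow> 'b \<Rightarrow> bool) \<Rightarrow> ('a \<Rightarrow> 'b) \<Rightarrow> bool" where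
  "join_pres_emb P le P' le' f \<longleftrightarrow> (\<forall>x\<in>P. f x \<in> P') \<and>
     (\<forall>x\<in>P. \<forall>y\<in>P. le x y \<longleftrightarrow> le' (f x) (f y)) \<and>
     (\<forall>X s. finite X \<longrightarrow> X \<subseteq> P \<longrightarrow> is_lub P le X s \<longrightarrow> is_lub P' le' (f ` X) (f s))"

text \<open>Lexicographic order on $\omega \times \alpha'$, the $\alpha'$-coordinate dominant.\<close>
definition omega_times_le :: "('b \<Rightarrow> 'b \<Rightarrow> bool) \<Rightarrow> nat \<times> 'b \<Rightarrow> nat \<times> 'b \<Rightarrow> bool" where
  "omega_times_le leB p q \<longleftrightarrow>
     (snd p \<noteq> snd q \<and> leB (snd p) (snd q)) \<or> (snd p = snd q \<and> fst p \<le> fst q)"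

definition omega_times_plus_le :: "('b \<Rightarrow> 'b \<Rightarrow> bool) \<Rightarrow> (nat \<times> 'b) + nat \<Rightarrow> (nat \<times> 'b) + nat \<Rightarrow> bool" where
  "omega_times_plus_le leB u v = (case (u, v) of
      (Inl p, Inl q) \<Rightarrow> omega_times_le leB p q
    | (Inl p, Inr j) \<Rightarrow> True
    | (Inr i, Inl q) \<Rightarrow> False
    | (Inr i, Inr j) \<Rightarrow> i \<le> j)"

definition omega_times_plus :: "'b set \<Rightarrow> nat \<Rightarrow> ((nat \<times> 'b) + nat) set" where
  "omega_times_plus B n = (UNIV \<times> B) <+> {..<n}"

text \<open>Sierpinskisation of the chain (via bijection \<psi> : nat \<rightarrow> C) and \<omega>.\<close>
definition sierp_le :: "('a \<Rightarrow> 'a \<Rightarrow> bool) \<Rightarrow> (nat \<Rightarrow> 'a) \<Rightarrow> nat \<Rightarrow> nat \<Rightarrow> bool" where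
  "sierp_le leC \<psi> x y \<longleftrightarrow> x \<le> y \<and> leC (\<psi> x) (\<psi> y)"

text \<open>\<phi> induces a monotonic sierpinskisation of $\omega\alpha'$ and $\omega$.\<close>
definition monotonic_sierp_map :: "'b set \<Rightarrow> (nat \<Rightarrow> nat \<times> 'b) \<Rightarrow> bool" where
  "monotonic_sierp_map B \<phi> \<longleftrightarrow> bij_betw \<phi> UNIV (UNIV \<times> B) \<and>
     (\<forall>b\<in>B. \<forall>m m'. m \<le> m' \<longrightarrow> inv_into UNIV \<phi> (m, b) \<le> inv_into UNIV \<phi> (m', b))"

text \<open>Direct sum $\Omega(\alpha') \oplus n$: carrier nat <+> {..<n}, no comparabilities across.\<close>
definition dsum_le :: "(nat \<Rightarrow> nat \<Rightarrow> bool) \<Rightarrow> nat + nat \<Rightarrow> nat + nat \<Rightarrow> bool" where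
  "dsum_le le u v = (case (u, v) of
      (Inl x, Inl y) \<Rightarrow> le x y
    | (Inr i, Inr j) \<Rightarrow> i \<le> j
    | _ \<Rightarrow> False)"

definition S_alpha_carrier :: "nat \<Rightarrow> (nat + nat) set" where
  "S_alpha_carrier n = (UNIV :: nat set) <+> {..<n}"


end

theory Submission
  imports Defs
begin

lemma down_Un: "down P le (F \<union> G) = down P le F \<union> down P le G"
  by (auto simp: down_def)

lemma fin_inits_empty: "{} \<in> fin_inits P le"
  unfolding fin_inits_def by (rule CollectI, rule exI[of _ "{}"]) (auto simp: down_def)

lemma fin_inits_Un: "X \<in> fin_inits P le \<Longrightarrow> Y \<in> fin_inits P le \<Longrightarrow> X \<union> Y \<in> fin_inits P le"
  unfolding fin_inits_def
  by (auto simp: down_Un[symmetric]) (metis finite_UnI le_sup_iff)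

lemma fin_inits_Union: "finite XX \<Longrightarrow> XX \<subseteq> fin_inits P le \<Longrightarrow> \<Union>XX \<in> fin_inits P le"
  by (induction XX rule: finite_induct) (auto simp: fin_inits_empty fin_inits_Un)

lemma lub_Union: "\<Union>X \<in> Q \<Longrightarrow> is_lub Q (\<subseteq>) X s \<longleftrightarrow> s = \<Union>X"
  unfolding is_lub_def by blast

lemma jsb: "join_semilattice_bot (fin_inits P le) (\<subseteq>)"
  unfolding join_semilattice_bot_def po_on_def
proof (intro conjI)
  show "\<exists>b\<in>fin_inits P le. \<forall>x\<in>fin_inits P le. b \<subseteq> x" using fin_inits_empty by blast
  show "\<forall>x\<in>fin_inits P le. \<forall>y\<in>fin_inits P le. \<exists>s. is_lub (fin_inits P le) (\<subseteq>) {x, y} s"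
  proof (intro ballI)
    fix x y assume "x \<in> fin_inits P le" "y \<in> fin_inits P le"
    then have "\<Union>{x,y} \<in> fin_inits P le" using fin_inits_Un by auto
    then show "\<exists>s. is_lub (fin_inits P le) (\<subseteq>) {x, y} s" using lub_Union by blast
  qed
qed auto

lemma inJ_from_reflect:
  assumes eP: "\<And>x. x \<in> A \<Longrightarrow> e x \<in> P"
    and refl: "\<And>x. x \<in> A \<Longrightarrow> le (e x) (e x)"
    and refl2: "\<And>x y. x \<in> A \<Longrightarrow> y \<in> A \<Longrightarrow> le (e x) (e y) \<Longrightarrow> leA x y"
  shows "in_J A leA (fin_inits P le) (\<subseteq>)"
  unfolding in_J_def
proof (intro conjI jsb exI[of _ "\<lambda>X. {Z \<in> fin_inits P le. Z \<subseteq> down P le (e ` X)}"] allI impI)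
  fix X
  show "ideal_of (fin_inits P le) (\<subseteq>) {Z \<in> fin_inits P le. Z \<subseteq> down P le (e ` X)}"
    unfolding ideal_of_def init_seg_def
  proof (intro conjI)
    show "{Z \<in> fin_inits P le. Z \<subseteq> down P le (e ` X)} \<noteq> {}" using fin_inits_empty by blast
    show "\<forall>x\<in>{Z \<in> fin_inits P le. Z \<subseteq> down P le (e ` X)}.
       \<forall>y\<in>{Z \<in> fin_inits P le. Z \<subseteq> down P le (e ` X)}.
          \<exists>z\<in>{Z \<in> fin_inits P le. Z \<subseteq> down P le (e ` X)}. x \<subseteq> z \<and> y \<subseteq> z"
      by (metis (no_types, lifting) Un_subset_iff fin_inits_Un mem_Collect_eq sup.cobounded1 sup.cobounded2)
  qed auto
next
  fix X Y assume X: "init_seg A leA X" and Y: "init_seg A leA Y"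
  show "X \<subseteq> Y \<longleftrightarrow> {Z \<in> fin_inits P le. Z \<subseteq> down P le (e ` X)} \<subseteq> {Z \<in> fin_inits P le. Z \<subseteq> down P le (e ` Y)}"
  proof
    assume "X \<subseteq> Y" then show "{Z \<in> fin_inits P le. Z \<subseteq> down P le (e ` X)} \<subseteq> {Z \<in> fin_inits P le. Z \<subseteq> down P le (e ` Y)}"
      by (fastforce simp: down_def)
  next
    assume H: "{Z \<in> fin_inits P le. Z \<subseteq> down P le (e ` X)} \<subseteq> {Z \<in> fin_inits P le. Z \<subseteq> down P le (e ` Y)}"
    show "X \<subseteq> Y"
    proof
      fix x assume xX: "x \<in> X"
      then have xA: "x \<in> A" using X by (auto simp: init_seg_def)
      have "down P le {e x} \<in> fin_inits P le" unfolding fin_inits_def using eP[OF xA] by blast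
      moreover have "down P le {e x} \<subseteq> down P le (e ` X)" using xX by (auto simp: down_def)
      ultimately have "down P le {e x} \<subseteq> down P le (e ` Y)" using H by blast
      moreover have "e x \<in> down P le {e x}" using eP[OF xA] refl[OF xA] by (auto simp: down_def)
      ultimately obtain y where "y \<in> Y" "le (e x) (e y)" by (auto simp: down_def)
      moreover have "y \<in> A" using \<open>y \<in> Y\<close> Y by (auto simp: init_seg_def)
      ultimately show "x \<in> Y" using refl2 xA Y by (auto simp: init_seg_def)
    qed
  qed
qed

lemma emb_from_reflect:
  assumes trans: "\<And>x y z. x \<in> P \<Longrightarrow> y \<in> P \<Longrightarrow> z \<in> P \<Longrightarrow> le x y \<Longrightarrow> le y z \<Longrightarrow> le x z"
    and refl': "\<And>x. x \<in> P \<Longrightarrow> le' (t x) (t x)"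
    and tP: "\<And>x. x \<in> P \<Longrightarrow> t x \<in> P'"
    and refl: "\<And>z w. z \<in> P \<Longrightarrow> w \<in> P \<Longrightarrow> le' (t z) (t w) \<Longrightarrow> le z w"
    and fin: "\<And>Z. Z \<in> fin_inits P le \<Longrightarrow> finite Z"
  shows "join_pres_emb (fin_inits P le) (\<subseteq>) (fin_inits P' le') (\<subseteq>) (\<lambda>Z. down P' le' (t ` Z))"
proof -
  have sub: "Z \<subseteq> P" if "Z \<in> fin_inits P le" for Z using that by (auto simp: fin_inits_def down_def)
  have img: "down P' le' (t ` Z) \<in> fin_inits P' le'" if "Z \<in> fin_inits P le" for Z
    unfolding fin_inits_def using fin[OF that] sub[OF that] tP by blast
  have ord: "Z1 \<subseteq> Z2 \<longleftrightarrow> down P' le' (t ` Z1) \<subseteq> down P' le' (t ` Z2)"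
    if Z1: "Z1 \<in> fin_inits P le" and Z2: "Z2 \<in> fin_inits P le" for Z1 Z2
  proof
    assume "Z1 \<subseteq> Z2" then show "down P' le' (t ` Z1) \<subseteq> down P' le' (t ` Z2)" by (auto simp: down_def)
  next
    assume H: "down P' le' (t ` Z1) \<subseteq> down P' le' (t ` Z2)"
    show "Z1 \<subseteq> Z2"
    proof
      fix z assume zZ: "z \<in> Z1"
      then have zP: "z \<in> P" using sub[OF Z1] by auto
      have "t z \<in> down P' le' (t ` Z1)" using zZ tP[OF zP] refl'[OF zP] by (auto simp: down_def)
      then obtain w where w: "w \<in> Z2" "le' (t z) (t w)" using H by (auto simp: down_def)
      have wP: "w \<in> P" using w sub[OF Z2] by auto
      have zw: "le z w" using refl[OF zP wP w(2)] .
      obtain F where F: "F \<subseteq> P" "Z2 = down P le F" using Z2 by (auto simp: fin_inits_def)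
      then obtain x where "x \<in> F" "le w x" using w by (auto simp: down_def)
      then have "le z x" using trans[OF zP wP] zw F by auto
      then show "z \<in> Z2" using F \<open>x \<in> F\<close> zP by (auto simp: down_def)
    qed
  qed
  show ?thesis unfolding join_pres_emb_def
  proof (intro conjI ballI allI impI)
    fix X s assume X: "finite X" "X \<subseteq> fin_inits P le" and L: "is_lub (fin_inits P le) (\<subseteq>) X s"
    have "\<Union>X \<in> fin_inits P le" using fin_inits_Union X by blast
    then have s: "s = \<Union>X" using lub_Union L by blast
    have eq: "down P' le' (t ` s) = \<Union>((\<lambda>Z. down P' le' (t ` Z)) ` X)" unfolding s by (auto simp: down_def)
    have "down P' le' (t ` s) \<in> fin_inits P' le'" using img \<open>\<Union>X \<in> fin_inits P le\<close> s by blast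
    then show "is_lub (fin_inits P' le') (\<subseteq>) ((\<lambda>Z. down P' le' (t ` Z)) ` X) (down P' le' (t ` s))"
      using lub_Union eq by (metis (no_types, lifting))
  qed (use img ord in auto)
qed



definition pick :: "(nat \<Rightarrow> (nat \<times> 'b) + nat) \<Rightarrow> nat \<Rightarrow> 'b \<Rightarrow> nat" where
  "pick lam P b = (SOME p. P \<le> p \<and> (\<exists>m. lam p = Inl (m, b)))"

primrec seqq :: "(nat \<Rightarrow> (nat \<times> 'b) + nat) \<Rightarrow> (nat \<Rightarrow> nat \<times> 'b) \<Rightarrow> nat \<Rightarrow> nat \<Rightarrow> nat" where
  "seqq lam phi K 0 = pick lam K (snd (phi 0))"
| "seqq lam phi K (Suc x) = pick lam (Suc (seqq lam phi K x)) (snd (phi (Suc x)))"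

lemma pick_ex:
  fixes lam :: "nat \<Rightarrow> (nat \<times> 'b) + nat"
  assumes "bij_betw lam UNIV ((UNIV \<times> B) <+> {..<n})" "b \<in> B"
  shows "\<exists>p. P \<le> p \<and> (\<exists>m. lam p = Inl (m, b))"
proof -
  define g where "g m = inv_into UNIV lam (Inl (m, b))" for m
  have lg: "lam (g m) = Inl (m, b)" for m
  proof -
    have "Inl (m, b) \<in> range lam" using assms by (auto simp: bij_betw_def)
    then show ?thesis unfolding g_def by (rule f_inv_into_f)
  qed
  have "inj g"
  proof (rule injI)
    fix x y assume "g x = g y"
    then have "lam (g x) = lam (g y)" by simp
    then show "x = y" unfolding lg by simp
  qed
  then have "infinite (range g)" by (simp add: finite_image_iff)
  then obtain p where "P \<le> p" "p \<in> range g" unfolding infinite_nat_iff_unbounded_le by blast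
  then show ?thesis using lg by blast
qed

lemma pick_props:
  fixes lam :: "nat \<Rightarrow> (nat \<times> 'b) + nat"
  assumes "bij_betw lam UNIV ((UNIV \<times> B) <+> {..<n})" "b \<in> B"
  shows "P \<le> pick lam P b \<and> (\<exists>m. lam (pick lam P b) = Inl (m, b))"
  unfolding pick_def by (rule someI_ex) (rule pick_ex[OF assms])

lemma seqq_props:
  fixes lam :: "nat \<Rightarrow> (nat \<times> 'b) + nat"
  assumes "bij_betw lam UNIV ((UNIV \<times> B) <+> {..<n})" "\<And>x. snd (phi x) \<in> B"
  shows "K \<le> seqq lam phi K x \<and> (\<exists>m. lam (seqq lam phi K x) = Inl (m, snd (phi x)))
      \<and> seqq lam phi K x < seqq lam phi K (Suc x)"
proof (induction x)
  case 0
  then show ?case using pick_props[OF assms(1) assms(2)[of 0], of K]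
      pick_props[OF assms(1) assms(2)[of "Suc 0"], of "Suc (seqq lam phi K 0)"] by simp
next
  case (Suc x)
  then show ?case using pick_props[OF assms(1) assms(2)[of "Suc x"], of "Suc (seqq lam phi K x)"]
      pick_props[OF assms(1) assms(2)[of "Suc (Suc x)"], of "Suc (seqq lam phi K (Suc x))"] by simp
qed

lemma otl_refl: "omega_times_le leB p p"
  by (simp add: omega_times_le_def)

lemma otl_trans:
  assumes "lin_on B leB" "snd p \<in> B" "snd q \<in> B" "snd r \<in> B"
    "omega_times_le leB p q" "omega_times_le leB q r"
  shows "omega_times_le leB p r"
proof -
  have tr: "\<And>x y z. x \<in> B \<Longrightarrow> y \<in> B \<Longrightarrow> z \<in> B \<Longrightarrow> leB x y \<Longrightarrow> leB y z \<Longrightarrow> leB x z"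
    and an: "\<And>x y. x \<in> B \<Longrightarrow> y \<in> B \<Longrightarrow> leB x y \<Longrightarrow> leB y x \<Longrightarrow> x = y"
    using assms(1) unfolding lin_on_def po_on_def by blast+
  show ?thesis using assms(2-6) tr[of "snd p" "snd q" "snd r"] an[of "snd p" "snd q"]
    unfolding omega_times_le_def by auto
qed

lemma dsum_refl: "dsum_le (sierp_le (omega_times_le leB) phi) u u"
  by (cases u) (auto simp: dsum_le_def sierp_le_def otl_refl)

lemma dsum_trans:
  assumes "lin_on B leB" "\<And>x. snd (phi x) \<in> B"
    "dsum_le (sierp_le (omega_times_le leB) phi) u v" "dsum_le (sierp_le (omega_times_le leB) phi) v w"
  shows "dsum_le (sierp_le (omega_times_le leB) phi) u w"
proof (cases u; cases v; cases w)
  fix a b c assume *: "u = Inl a" "v = Inl b" "w = Inl c"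
  then have "a \<le> b" "b \<le> c" "omega_times_le leB (phi a) (phi b)" "omega_times_le leB (phi b) (phi c)"
    using assms(3,4) by (simp_all add: dsum_le_def sierp_le_def)
  then show ?thesis using * otl_trans[OF assms(1) assms(2) assms(2) assms(2)]
    by (simp add: dsum_le_def sierp_le_def)
qed (use assms(3,4) in \<open>simp_all add: dsum_le_def\<close>)

lemma S_fin:
  assumes "Z \<in> fin_inits (S_alpha_carrier n) (dsum_le (sierp_le (omega_times_le leB) phi))"
  shows "finite Z"
proof -
  obtain F where F: "finite F" "Z = down (S_alpha_carrier n) (dsum_le (sierp_le (omega_times_le leB) phi)) F"
    using assms by (auto simp: fin_inits_def)
  have "Z \<subseteq> (\<Union>x\<in>F. Inl ` {..case_sum id id x} \<union> Inr ` {..case_sum id id x})"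
  proof
    fix u assume "u \<in> Z"
    then obtain x where "x \<in> F" "dsum_le (sierp_le (omega_times_le leB) phi) u x"
      using F by (auto simp: down_def)
    then show "u \<in> (\<Union>x\<in>F. Inl ` {..case_sum id id x} \<union> Inr ` {..case_sum id id x})"
      apply (intro UN_I[OF \<open>x \<in> F\<close>]) by (cases u; cases x) (auto simp: dsum_le_def sierp_le_def)
  qed
  moreover have "finite (\<Union>x\<in>F. Inl ` {..case_sum id id x} \<union> Inr ` {..case_sum id id x})"
    using F(1) by auto
  ultimately show ?thesis by (rule finite_subset)
qed

theorem lemma2p8:
  fixes A :: "'a set" and leA :: "'a \<Rightarrow> 'a \<Rightarrow> bool"
    and B :: "'b set" and leB :: "'b \<Rightarrow> 'b \<Rightarrow> bool"
    and n :: nat and \<phi> :: "nat \<Rightarrow> nat \<times> 'b"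
  assumes "lin_on A leA" and "countable A" and "infinite A"
    and "lin_on B leB" and "countable B"
    and "order_iso A leA (omega_times_plus B n) (omega_times_plus_le leB)"
    and "monotonic_sierp_map B \<phi>"
  shows "in_J A leA
           (fin_inits (S_alpha_carrier n) (dsum_le (sierp_le (omega_times_le leB) \<phi>)))
           (\<subseteq>)
       \<and> (\<forall>\<psi>. bij_betw \<psi> (UNIV :: nat set) A \<longrightarrow>
            (\<exists>f. join_pres_emb
                   (fin_inits (S_alpha_carrier n) (dsum_le (sierp_le (omega_times_le leB) \<phi>))) (\<subseteq>)
                   (fin_inits (UNIV :: nat set) (sierp_le leA \<psi>)) (\<subseteq>) f))"
proof -
  obtain h where hb: "bij_betw h A (omega_times_plus B n)"
    and hle: "\<And>x y. x \<in> A \<Longrightarrow> y \<in> A \<Longrightarrow> leA x y \<longleftrightarrow> omega_times_plus_le leB (h x) (h y)"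
    using assms(6) unfolding order_iso_def by blast
  have phib: "bij_betw \<phi> UNIV (UNIV \<times> B)"
    and mono: "\<And>b m m'. b \<in> B \<Longrightarrow> m \<le> m' \<Longrightarrow> inv_into UNIV \<phi> (m, b) \<le> inv_into UNIV \<phi> (m', b)"
    using assms(7) unfolding monotonic_sierp_map_def by blast+
  have phiB: "\<And>x. snd (\<phi> x) \<in> B"
  proof -
    fix x have "\<phi> x \<in> UNIV \<times> B" using phib by (auto simp: bij_betw_def)
    then show "snd (\<phi> x) \<in> B" by auto
  qed
  have injphi: "inj \<phi>" using phib by (auto simp: bij_betw_def)
  have phiinv: "\<And>p. p \<in> UNIV \<times> B \<Longrightarrow> \<phi> (inv_into UNIV \<phi> p) = p"
    using phib by (intro f_inv_into_f) (auto simp: bij_betw_def)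
  have invphi: "\<And>x. inv_into UNIV \<phi> (\<phi> x) = x" using injphi by (simp add: inv_into_f_f)
  have hC: "\<And>x. x \<in> A \<Longrightarrow> h x \<in> (UNIV \<times> B) <+> {..<n}"
    using hb by (auto simp: bij_betw_def omega_times_plus_def)
  have olerefl: "\<And>c. omega_times_plus_le leB c c"
    by (case_tac c) (auto simp: omega_times_plus_le_def otl_refl)
  define e where "e x = (case h x of Inl p \<Rightarrow> Inl (inv_into UNIV \<phi> p) | Inr i \<Rightarrow> Inr i)" for x
  have part1: "in_J A leA (fin_inits (S_alpha_carrier n) (dsum_le (sierp_le (omega_times_le leB) \<phi>))) (\<subseteq>)"
  proof (rule inJ_from_reflect)
    fix x assume x: "x \<in> A"
    show "e x \<in> S_alpha_carrier n" using hC[OF x]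
      by (cases "h x") (auto simp: e_def S_alpha_carrier_def)
    show "dsum_le (sierp_le (omega_times_le leB) \<phi>) (e x) (e x)" by (rule dsum_refl)
  next
    fix x y assume x: "x \<in> A" and y: "y \<in> A"
      and le: "dsum_le (sierp_le (omega_times_le leB) \<phi>) (e x) (e y)"
    show "leA x y"
    proof (cases "h x"; cases "h y")
      fix p q assume p: "h x = Inl p" and q: "h y = Inl q"
      have "p \<in> UNIV \<times> B" "q \<in> UNIV \<times> B" using hC[OF x] hC[OF y] p q by auto
      then have "omega_times_le leB p q" using le p q phiinv
        by (simp add: e_def dsum_le_def sierp_le_def)
      then show ?thesis using hle[OF x y] p q by (simp add: omega_times_plus_le_def)
    next
      fix p j assume "h x = Inl p" "h y = Inr j"
      then show ?thesis using le by (simp add: e_def dsum_le_def)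
    next
      fix i q assume "h x = Inr i" "h y = Inl q"
      then show ?thesis using le by (simp add: e_def dsum_le_def)
    next
      fix i j assume p: "h x = Inr i" and q: "h y = Inr j"
      then show ?thesis using le hle[OF x y] by (simp add: e_def dsum_le_def omega_times_plus_le_def)
    qed
  qed
  have part2: "\<exists>f. join_pres_emb
                   (fin_inits (S_alpha_carrier n) (dsum_le (sierp_le (omega_times_le leB) \<phi>))) (\<subseteq>)
                   (fin_inits (UNIV :: nat set) (sierp_le leA \<psi>)) (\<subseteq>) f"
    if psib: "bij_betw \<psi> (UNIV :: nat set) A" for \<psi>
  proof -
    define lam where "lam = h \<circ> \<psi>"
    have lamb: "bij_betw lam UNIV ((UNIV \<times> B) <+> {..<n})"
      unfolding lam_def using bij_betw_trans[OF psib hb] by (simp add: omega_times_plus_def)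
    define pos where "pos = inv_into UNIV lam"
    define K where "K = Suc (\<Sum>i<n. pos (Inr i))"
    define t where "t u = (case u of Inl x \<Rightarrow> seqq lam \<phi> K x | Inr i \<Rightarrow> pos (Inr i))" for u
    have sp: "K \<le> seqq lam \<phi> K x \<and> (\<exists>m. lam (seqq lam \<phi> K x) = Inl (m, snd (\<phi> x)))
      \<and> seqq lam \<phi> K x < seqq lam \<phi> K (Suc x)" for x
      by (rule seqq_props[OF lamb phiB])
    have smono: "strict_mono (seqq lam \<phi> K)" using sp by (simp add: strict_mono_Suc_iff)
    have lampos: "lam (pos (Inr i)) = Inr i" if "i < n" for i
      unfolding pos_def using lamb that by (intro f_inv_into_f) (auto simp: bij_betw_def)
    have posK: "pos (Inr i) < K" if "i < n" for i
    proof -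
      have "pos (Inr i) \<le> (\<Sum>i<n. pos (Inr i))" using that by (intro member_le_sum) auto
      then show ?thesis by (simp add: K_def)
    qed
    have psiA: "\<And>k. \<psi> k \<in> A" using psib by (auto simp: bij_betw_def)
    have leT: "sierp_le leA \<psi> k l \<longleftrightarrow> k \<le> l \<and> omega_times_plus_le leB (lam k) (lam l)" for k l
      using hle[OF psiA psiA] by (simp add: sierp_le_def lam_def)
    show ?thesis
    proof (rule exI, rule emb_from_reflect[where t = t])
      fix x y z
      show "dsum_le (sierp_le (omega_times_le leB) \<phi>) x y \<Longrightarrow>
            dsum_le (sierp_le (omega_times_le leB) \<phi>) y z \<Longrightarrow>
            dsum_le (sierp_le (omega_times_le leB) \<phi>) x z"
        by (rule dsum_trans[OF assms(4) phiB])
    next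
      fix x show "sierp_le leA \<psi> (t x) (t x)" using leT olerefl by simp
    next
      fix x show "t x \<in> UNIV" by simp
    next
      fix Z assume "Z \<in> fin_inits (S_alpha_carrier n) (dsum_le (sierp_le (omega_times_le leB) \<phi>))"
      then show "finite Z" by (rule S_fin)
    next
      fix z w assume z: "z \<in> S_alpha_carrier n" and w: "w \<in> S_alpha_carrier n"
        and le: "sierp_le leA \<psi> (t z) (t w)"
      show "dsum_le (sierp_le (omega_times_le leB) \<phi>) z w"
      proof (cases z; cases w)
        fix x y assume zx: "z = Inl x" and wy: "w = Inl y"
        obtain m1 where m1: "lam (seqq lam \<phi> K x) = Inl (m1, snd (\<phi> x))" using sp by blast
        obtain m2 where m2: "lam (seqq lam \<phi> K y) = Inl (m2, snd (\<phi> y))" using sp by blast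
        have "seqq lam \<phi> K x \<le> seqq lam \<phi> K y" and ol: "omega_times_le leB (m1, snd (\<phi> x)) (m2, snd (\<phi> y))"
          using le zx wy leT m1 m2 by (simp_all add: t_def omega_times_plus_le_def)
        then have xy: "x \<le> y" using smono by (simp add: strict_mono_less_eq)
        have "omega_times_le leB (\<phi> x) (\<phi> y)"
        proof (cases "snd (\<phi> x) = snd (\<phi> y)")
          case True
          have "fst (\<phi> x) \<le> fst (\<phi> y)"
          proof (rule ccontr)
            assume "\<not> fst (\<phi> x) \<le> fst (\<phi> y)"
            then have "fst (\<phi> y) \<le> fst (\<phi> x)" by simp
            from mono[OF phiB[of y] this]
            have "inv_into UNIV \<phi> (\<phi> y) \<le> inv_into UNIV \<phi> (\<phi> x)" using True
              by (metis prod.collapse)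
            then have "y \<le> x" using invphi by simp
            then have "x = y" using xy by simp
            then show False using \<open>\<not> fst (\<phi> x) \<le> fst (\<phi> y)\<close> by simp
          qed
          then show ?thesis using True by (simp add: omega_times_le_def)
        next
          case False
          then show ?thesis using ol by (simp add: omega_times_le_def)
        qed
        then show ?thesis using zx wy xy by (simp add: dsum_le_def sierp_le_def)
      next
        fix x j assume zx: "z = Inl x" and wj: "w = Inr j"
        have "j < n" using w wj by (auto simp: S_alpha_carrier_def)
        then have "pos (Inr j) < seqq lam \<phi> K x" using posK[of j] sp[of x] by linarith
        then show ?thesis using le zx wj leT by (simp add: t_def)
      next
        fix i y assume zi: "z = Inr i" and wy: "w = Inl y"
        have "i < n" using z zi by (auto simp: S_alpha_carrier_def)
        obtain m2 where m2: "lam (seqq lam \<phi> K y) = Inl (m2, snd (\<phi> y))" using sp by blast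
        show ?thesis using le zi wy leT m2 lampos[OF \<open>i < n\<close>] by (simp add: t_def omega_times_plus_le_def)
      next
        fix i j assume zi: "z = Inr i" and wj: "w = Inr j"
        have "i < n" "j < n" using z zi w wj by (auto simp: S_alpha_carrier_def)
        then show ?thesis using le zi wj leT lampos
          by (simp add: t_def omega_times_plus_le_def dsum_le_def)
      qed
    qed
  qed
  show ?thesis using part1 part2 by blast
qed

end
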